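(* Let $n,m\ge 1$, let $\boldsymbol{W}\in\mathbb{R}^{n\times n}$ be symmetric with non-negative entries, $\boldsymbol{S}=(s_{kr})\in[0,1]^{m\times m}$ symmetric with $s_{kk}=0$, $\boldsymbol{\gamma}\in\mathbb{R}^m$, $\boldsymbol{\rho}\in[\frac{\pi}{4},\frac{\pi}{2})^m$, $\alpha\in\mathbb{R}$, and $S_k=\sum_{r}s_{kr}$. Let the neuron set $V=\{1,\dots,n\}$ be bipartitioned as $V=U\cup L$ with $U=\{1,\dots,h\}$, $L=\{h+1,\dots,n\}$. The state space $\mathcal{X}$ consists of matrices $\boldsymbol{X}=(x_{ik})_{i\in V,1\le k\le m}$ with $x_{ik}\in\{\sin\rho_k,-\cos\rho_k\}$, written $\boldsymbol{X}=(\boldsymbol{L},\boldsymbol{U})$ with $\boldsymbol{L}$ the rows indexed by $L$ and $\boldsymbol{U}$ the rows indexed by $U$. Define the energy of the multitask Hopfield network $\mathcal{H}=\langle\boldsymbol{W},\boldsymbol{\gamma},\boldsymbol{\rho},\boldsymbol{S}\rangle$ as $$E_{\mathcal{H}}(\boldsymbol{X})=\sum_{k=1}^m\Big(-\tfrac12 {\boldsymbol{x}^{(k)}}^T\boldsymbol{W}\boldsymbol{x}^{(k)}+\gamma_k\sum_{i=1}^n x_{ik}+\tfrac{\alpha}{2}\Big(S_k\sum_{i=1}^n x_{ik}^2-\sum_{r\ne k}s_{kr}\sum_{i=1}^n x_{ik}x_{ir}\Big)\Big),$$ and, for a fixed $\boldsymbol{L}=(\boldsymbol{l}^{(1)},\dots,\boldsymbol{l}^{(m)})$,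 the energy of the subnetwork $\mathcal{H}_U=\langle\boldsymbol{W}_{UU},\boldsymbol{\gamma},\boldsymbol{\rho},\boldsymbol{S}\rangle$ restricted to $U$ (with labeled neurons clamped to $\boldsymbol{L}$) as $$E_{\mathcal{H}_U}(\boldsymbol{U})=\sum_{k=1}^m\Big(-\tfrac12 {\boldsymbol{u}^{(k)}}^T\boldsymbol{W}_{UU}\boldsymbol{u}^{(k)}+{\boldsymbol{u}^{(k)}}^T\big(\gamma_k\boldsymbol{e}_h-\boldsymbol{W}_{UL}\boldsymbol{l}^{(k)}\big)+\tfrac{\alpha}{2}\Big(S_k\sum_{i=1}^h u_{ik}^2-\sum_{r\ne k}s_{kr}\sum_{i=1}^h u_{ik}u_{ir}\Big)\Big),$$ where $\boldsymbol{u}^{(k)}$ is the $k$-th column of $\boldsymbol{U}$, $\boldsymbol{e}_h$ the all-ones vector of length $h$, and $\boldsymbol{W}_{UU},\boldsymbol{W}_{UL}$ the submatrices of $\boldsymbol{W}$ with rows in $U$ and columns in $U$, resp. $L$. If $\boldsymbol{L}$ is part of a global minimum of $E_{\mathcal{H}}$ (i.e. there exists $\boldsymbol{U}^*$ such that $(\boldsymbol{L},\boldsymbol{U}^* )$ minimizes $E_{\mathcal{H}}$ over $\mathcal{X}$) and $\boldsymbol{U}$ is a global minimum of $E_{\mathcal{H}_U}$, then $(\boldsymbol{L},\boldsymbol{U})$ is a global minimum of $E_{\mathcal{H}}$.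
   Context: $\boldsymbol{x}^{(k)}$ denotes the $k$-th column of $\boldsymbol{X}$ (the state vector for task $k$). In $\mathcal{H}_U$ the contribution of the labeled neurons, whose states are fixed to $\boldsymbol{L}$, is absorbed into the activation thresholds $\gamma_k\boldsymbol{e}_h-\boldsymbol{W}_{UL}\boldsymbol{l}^{(k)}$. *)

theory Defs
  imports Complex_Main
begin

text \<open>Conventions: neurons are indexed 0..<n, tasks 0..<m (0-based instead of
1-based). The unlabeled block U is {0..<h}, the labeled block L is {h..<n}.
Matrices are functions nat => nat => real; only entries in range matter.\<close>

definition state_space :: "nat \<Rightarrow> nat \<Rightarrow> (nat \<Rightarrow> real) \<Rightarrow> (nat \<Rightarrow> nat \<Rightarrow> real) set" where
  "state_space n m \<rho> = {X. \<forall>i<n. \<forall>k<m. X i k \<in> {sin (\<rho> k), - cos (\<rho> k)}}"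

definition sub_state_space :: "nat \<Rightarrow> nat \<Rightarrow> (nat \<Rightarrow> real) \<Rightarrow> (nat \<Rightarrow> nat \<Rightarrow> real) set" where
  "sub_state_space h m \<rho> = state_space h m \<rho>"

definition join_state :: "nat \<Rightarrow> (nat \<Rightarrow> nat \<Rightarrow> real) \<Rightarrow> (nat \<Rightarrow> nat \<Rightarrow> real) \<Rightarrow> nat \<Rightarrow> nat \<Rightarrow> real" where
  "join_state h Lm Um = (\<lambda>i k. if i < h then Um i k else Lm i k)"

definition Ssum :: "nat \<Rightarrow> (nat \<Rightarrow> nat \<Rightarrow> real) \<Rightarrow> nat \<Rightarrow> real" where
  "Ssum m S k = (\<Sum>r<m. S k r)"

definition energy ::
  "nat \<Rightarrow> nat \<Rightarrow> (nat \<Rightarrow> nat \<Rightarrow> real) \<Rightarrow> (nat \<Rightarrow> real) \<Rightarrow> (nat \<Rightarrow> nat \<Rightarrow> real) \<Rightarrow> real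
   \<Rightarrow> (nat \<Rightarrow> nat \<Rightarrow> real) \<Rightarrow> real" where
  "energy n m W \<gamma> S \<alpha> X =
    (\<Sum>k<m. - (1/2) * (\<Sum>i<n. \<Sum>j<n. X i k * W i j * X j k)
            + \<gamma> k * (\<Sum>i<n. X i k)
            + (\<alpha>/2) * (Ssum m S k * (\<Sum>i<n. (X i k)\<^sup>2)
                        - (\<Sum>r\<in>{r. r < m \<and> r \<noteq> k}. S k r * (\<Sum>i<n. X i k * X i r))))"

definition sub_energy ::
  "nat \<Rightarrow> nat \<Rightarrow> nat \<Rightarrow> (nat \<Rightarrow> nat \<Rightarrow> real) \<Rightarrow> (nat \<Rightarrow> real) \<Rightarrow> (nat \<Rightarrow> nat \<Rightarrow> real) \<Rightarrow> real
   \<Rightarrow> (nat \<Rightarrow> nat \<Rightarrow> real) \<Rightarrow> (nat \<Rightarrow> nat \<Rightarrow> real) \<Rightarrow> real" where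
  "sub_energy n h m W \<gamma> S \<alpha> Lm Um =
    (\<Sum>k<m. - (1/2) * (\<Sum>i<h. \<Sum>j<h. Um i k * W i j * Um j k)
            + (\<Sum>i<h. Um i k * (\<gamma> k - (\<Sum>j\<in>{h..<n}. W i j * Lm j k)))
            + (\<alpha>/2) * (Ssum m S k * (\<Sum>i<h. (Um i k)\<^sup>2)
                        - (\<Sum>r\<in>{r. r < m \<and> r \<noteq> k}. S k r * (\<Sum>i<h. Um i k * Um i r))))"

end

theory Submission
  imports Defs
begin

lemma split_sum: "(h::nat) \<le> n \<Longrightarrow> (\<Sum>i<n. f i) = (\<Sum>i<h. f i) + (\<Sum>i\<in>{h..<n}. f i)"
proof -
  assume "h \<le> n"
  then have "sum f {0..<h} + sum f {h..<n} = sum f {0..<n}"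
    by (intro sum.atLeastLessThan_concat) auto
  then show ?thesis by (simp add: atLeast0LessThan)
qed

lemma quad_split:
  fixes W X :: "nat \<Rightarrow> nat \<Rightarrow> real"
  assumes hn: "h \<le> n" and sym: "\<forall>i<n. \<forall>j<n. W i j = W j i"
  shows "(\<Sum>i<n. \<Sum>j<n. join_state h L U i k * W i j * join_state h L U j k)
       = (\<Sum>i<h. \<Sum>j<h. U i k * W i j * U j k)
         + 2 * (\<Sum>i<h. U i k * (\<Sum>j\<in>{h..<n}. W i j * L j k))
         + (\<Sum>i\<in>{h..<n}. \<Sum>j\<in>{h..<n}. L i k * W i j * L j k)"
proof -
  let ?X = "join_state h L U"
  have A: "(\<Sum>i<n. \<Sum>j<n. ?X i k * W i j * ?X j k)
     = (\<Sum>i<h. (\<Sum>j<h. ?X i k * W i j * ?X j k) + (\<Sum>j\<in>{h..<n}. ?X i k * W i j * ?X j k))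
     + (\<Sum>i\<in>{h..<n}. (\<Sum>j<h. ?X i k * W i j * ?X j k) + (\<Sum>j\<in>{h..<n}. ?X i k * W i j * ?X j k))"
    by (simp only: split_sum[OF hn] sum.distrib)
  have B1: "(\<Sum>i<h. (\<Sum>j<h. ?X i k * W i j * ?X j k) + (\<Sum>j\<in>{h..<n}. ?X i k * W i j * ?X j k))
      = (\<Sum>i<h. \<Sum>j<h. U i k * W i j * U j k) + (\<Sum>i<h. U i k * (\<Sum>j\<in>{h..<n}. W i j * L j k))"
    by (simp add: join_state_def sum.distrib sum_distrib_left mult.assoc)
  have B2: "(\<Sum>i\<in>{h..<n}. (\<Sum>j<h. ?X i k * W i j * ?X j k) + (\<Sum>j\<in>{h..<n}. ?X i k * W i j * ?X j k))
      = (\<Sum>i\<in>{h..<n}. \<Sum>j<h. L i k * W i j * U j k) + (\<Sum>i\<in>{h..<n}. \<Sum>j\<in>{h..<n}. L i k * W i j * L j k)"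
    by (simp add: join_state_def sum.distrib)
  have C: "(\<Sum>i\<in>{h..<n}. \<Sum>j<h. L i k * W i j * U j k) = (\<Sum>j<h. U j k * (\<Sum>i\<in>{h..<n}. W j i * L i k))"
  proof -
    have "(\<Sum>i\<in>{h..<n}. \<Sum>j<h. L i k * W i j * U j k) = (\<Sum>j<h. \<Sum>i\<in>{h..<n}. L i k * W i j * U j k)"
      by (rule sum.swap)
    also have "\<dots> = (\<Sum>j<h. \<Sum>i\<in>{h..<n}. U j k * (W j i * L i k))"
      using sym hn by (intro sum.cong refl) (auto simp: mult_ac)
    finally show ?thesis by (simp add: sum_distrib_left)
  qed
  show ?thesis using A B1 B2 C by simp
qed

lemma lin_split:
  assumes hn: "h \<le> n"
  shows "(\<Sum>i<n. g (join_state h L U i)) = (\<Sum>i<h. g (U i)) + (\<Sum>i\<in>{h..<n}. g (L i))"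
  using split_sum[OF hn, of "\<lambda>i. g (join_state h L U i)"] by (simp add: join_state_def)

definition Cconst where
  "Cconst n h m W \<gamma> S \<alpha> L =
    (\<Sum>k<m. - (1/2) * (\<Sum>i\<in>{h..<n}. \<Sum>j\<in>{h..<n}. L i k * W i j * L j k)
            + \<gamma> k * (\<Sum>i\<in>{h..<n}. L i k)
            + (\<alpha>/2) * (Ssum m S k * (\<Sum>i\<in>{h..<n}. (L i k)\<^sup>2)
                        - (\<Sum>r\<in>{r. r < m \<and> r \<noteq> k}. S k r * (\<Sum>i\<in>{h..<n}. L i k * L i r))))"

lemma alg: "- (1/2) * (A + 2*B + C) + (g::real) * (u + l) + a/2 * (s*(q1+q2) - (r1+r2))
  = (- (1/2) * A + (g*u - B) + a/2 * (s*q1 - r1)) + (- (1/2) * C + g*l + a/2*(s*q2 - r2))"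
  by (simp add: field_simps)

lemma energy_split:
  assumes hn: "h \<le> n" and sym: "\<forall>i<n. \<forall>j<n. W i j = W j i"
  shows "energy n m W \<gamma> S \<alpha> (join_state h L U) = sub_energy n h m W \<gamma> S \<alpha> L U + Cconst n h m W \<gamma> S \<alpha> L"
proof -
  have L1: "(\<Sum>i<n. join_state h L U i k) = (\<Sum>i<h. U i k) + (\<Sum>i\<in>{h..<n}. L i k)" for k
    using lin_split[OF hn, of "\<lambda>x. x k" L U] by simp
  have L2: "(\<Sum>i<n. (join_state h L U i k)\<^sup>2) = (\<Sum>i<h. (U i k)\<^sup>2) + (\<Sum>i\<in>{h..<n}. (L i k)\<^sup>2)" for k
    using lin_split[OF hn, of "\<lambda>x. (x k)\<^sup>2" L U] by simp
  have L3: "(\<Sum>i<n. join_state h L U i k * join_state h L U i r) = (\<Sum>i<h. U i k * U i r) + (\<Sum>i\<in>{h..<n}. L i k * L i r)" for k r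
    using lin_split[OF hn, of "\<lambda>x. x k * x r" L U] by simp
  have L4: "(\<Sum>r\<in>{r. r < m \<and> r \<noteq> k}. S k r * (\<Sum>i<n. join_state h L U i k * join_state h L U i r))
     = (\<Sum>r\<in>{r. r < m \<and> r \<noteq> k}. S k r * (\<Sum>i<h. U i k * U i r))
     + (\<Sum>r\<in>{r. r < m \<and> r \<noteq> k}. S k r * (\<Sum>i\<in>{h..<n}. L i k * L i r))" for k
    by (simp only: L3 distrib_left sum.distrib)
  have L5: "(\<Sum>i<h. U i k * (\<gamma> k - (\<Sum>j\<in>{h..<n}. W i j * L j k)))
     = \<gamma> k * (\<Sum>i<h. U i k) - (\<Sum>i<h. U i k * (\<Sum>j\<in>{h..<n}. W i j * L j k))" for k
    by (simp add: right_diff_distrib sum_subtractf sum_distrib_left mult.commute)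
  show ?thesis
    unfolding energy_def sub_energy_def Cconst_def sum.distrib[symmetric]
    apply (rule sum.cong[OF refl])
    apply (simp only: quad_split[OF hn sym] L1 L2 L4 L5)
    apply (rule alg)
    done
qed

theorem theorem3:
  fixes n m h :: nat and W S :: "nat \<Rightarrow> nat \<Rightarrow> real" and \<gamma> \<rho> :: "nat \<Rightarrow> real"
    and \<alpha> :: real and Lm Um :: "nat \<Rightarrow> nat \<Rightarrow> real"
  assumes "n \<ge> 1" and "m \<ge> 1" and "h \<le> n"
    and "\<forall>i<n. \<forall>j<n. W i j = W j i \<and> W i j \<ge> 0"
    and "\<forall>k<m. \<forall>r<m. S k r = S r k \<and> 0 \<le> S k r \<and> S k r \<le> 1"
    and "\<forall>k<m. S k k = 0"
    and "\<forall>k<m. pi/4 \<le> \<rho> k \<and> \<rho> k < pi/2"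
    and "\<exists>Ustar. join_state h Lm Ustar \<in> state_space n m \<rho> \<and>
           (\<forall>Y \<in> state_space n m \<rho>. energy n m W \<gamma> S \<alpha> (join_state h Lm Ustar) \<le> energy n m W \<gamma> S \<alpha> Y)"
    and "Um \<in> sub_state_space h m \<rho>"
    and "\<forall>U' \<in> sub_state_space h m \<rho>. sub_energy n h m W \<gamma> S \<alpha> Lm Um \<le> sub_energy n h m W \<gamma> S \<alpha> Lm U'"
  shows "join_state h Lm Um \<in> state_space n m \<rho> \<and>
         (\<forall>Y \<in> state_space n m \<rho>. energy n m W \<gamma> S \<alpha> (join_state h Lm Um) \<le> energy n m W \<gamma> S \<alpha> Y)"
proof -
  obtain Us where Us1: "join_state h Lm Us \<in> state_space n m \<rho>"
    and Us2: "\<forall>Y \<in> state_space n m \<rho>. energy n m W \<gamma> S \<alpha> (join_state h Lm Us) \<le> energy n m W \<gamma> S \<alpha> Y"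
    using assms(8) by blast
  have sym: "\<forall>i<n. \<forall>j<n. W i j = W j i" using assms(4) by blast
  have UsS: "Us \<in> sub_state_space h m \<rho>"
    unfolding sub_state_space_def state_space_def
  proof (intro CollectI allI impI)
    fix i k assume i: "i < h" and k: "k < m"
    have "join_state h Lm Us i k \<in> {sin (\<rho> k), - cos (\<rho> k)}"
      using Us1 i k assms(3) unfolding state_space_def by simp
    then show "Us i k \<in> {sin (\<rho> k), - cos (\<rho> k)}" using i by (simp add: join_state_def)
  qed
  have mem: "join_state h Lm Um \<in> state_space n m \<rho>"
    unfolding state_space_def
  proof (intro CollectI allI impI)
    fix i k assume i: "i < n" and k: "k < m"
    show "join_state h Lm Um i k \<in> {sin (\<rho> k), - cos (\<rho> k)}"
    proof (cases "i < h")
      case True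
      then show ?thesis using assms(9) k unfolding sub_state_space_def state_space_def join_state_def
        by simp
    next
      case False
      have "join_state h Lm Us i k \<in> {sin (\<rho> k), - cos (\<rho> k)}"
        using Us1 i k unfolding state_space_def by simp
      then show ?thesis using False by (simp add: join_state_def)
    qed
  qed
  have E: "\<And>U. energy n m W \<gamma> S \<alpha> (join_state h Lm U) = sub_energy n h m W \<gamma> S \<alpha> Lm U + Cconst n h m W \<gamma> S \<alpha> Lm"
    by (rule energy_split[OF assms(3) sym])
  have "sub_energy n h m W \<gamma> S \<alpha> Lm Um \<le> sub_energy n h m W \<gamma> S \<alpha> Lm Us"
    using assms(10) UsS by blast
  then have le: "energy n m W \<gamma> S \<alpha> (join_state h Lm Um) \<le> energy n m W \<gamma> S \<alpha> (join_state h Lm Us)"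
    unfolding E by linarith
  show ?thesis
  proof (intro conjI ballI mem)
    fix Y assume "Y \<in> state_space n m \<rho>"
    then have "energy n m W \<gamma> S \<alpha> (join_state h Lm Us) \<le> energy n m W \<gamma> S \<alpha> Y" using Us2 by blast
    then show "energy n m W \<gamma> S \<alpha> (join_state h Lm Um) \<le> energy n m W \<gamma> S \<alpha> Y" using le by linarith
  qed
qed

end
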